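(* Let $p,q$ be odd primes with $q-p=2$, and let $D=D_1\cdots D_n$ with $D_1,\dots,D_n$ distinct primes, $2\nmid D$, $p\nmid D$, $q\nmid D$. Let $E=E_-: y^2=x(x-pD)(x-qD)$ with the $2$-isogeny $\varphi:E\to E'$, $E': y^2=x^3+2(p+q)Dx^2+4D^2x$. For each $i$ put $\Pi_i^{-}(D)=\big(1-(\frac{p}{D_i})\big)+\big(1-(\frac{q}{D_i})\big)+\sum_{j=1,j\ne i}^n\big(1-(\frac{D_j}{D_i})\big)$ and $\rho^{-}(D)=\sum_{i=1}^n\Big[\frac{1}{1+\Pi_i^{-}(D)}\Big]$. Then: (1) There exists a subset $T\subset\{D_1,\dots,D_n\}$ with $\#T=\rho^{-}(D)$ such that $S^{(\varphi)}(E/\mathbb{Q})\supset\langle\{D_i^\star: D_i\in T\}\bmod\mathbb{Q}^{\star2}\rangle\cong(\mathbb{Z}/2\mathbb{Z})^{\rho^-(D)}$, where each $D_i^\star\in\{D_i,-D_i\}$. In particular $\dim_2S^{(\varphi)}(E/\mathbb{Q})\ge\rho^{-}(D)$. (2) If furthermore either (a) $p\equiv 7\pmod 8$ and $D_i\equiv 1,7\pmod 8$ for $1\le i\le n$, or (b) $p\equiv1\pmod 8$ and $D_i\equiv1,3\pmod 8$ for $1\le i\le n$, then for $T$ as in (1), $S^{(\varphi)}(E/\mathbb{Q})\supset\langle 2^\star\rangle\times\langle\{D_i^\star:D_i\in T\}\rangle\cong(\mathbb{Z}/2\mathbb{Z})^{\rho^-(D)+1}$ with $2^\star\in\{2,-2\}$.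 In particular $\dim_2S^{(\varphi)}(E/\mathbb{Q})\ge\rho^{-}(D)+1$.
   Context: $(\frac{\cdot}{\cdot})$ is the Legendre symbol and $[x]$ the greatest integer $\le x$. $\varphi(x,y)=(y^2/x^2,\ y(pqD^2-x^2)/x^2)$. The $\varphi$-Selmer group is viewed in $\mathbb{Q}^\star/\mathbb{Q}^{\star2}$: with $S=\{\infty,2,p,q,D_1,\dots,D_n\}$ and $\mathbb{Q}(S,2)=\langle -1,2,p,q,D_1,\dots,D_n\rangle$, it is the set of $d\in\mathbb{Q}(S,2)$ (squarefree integer representatives) such that $C_d: dw^2=d^2+2(p+q)Ddz^2+4D^2z^4$ has a $\mathbb{Q}_v$-point for every $v\in S$. *)

theory Defs
  imports Complex_Main "HOL-Number_Theory.Number_Theory" "HOL-Computational_Algebra.Squarefree"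
begin

text \<open>An l-adic integer is represented as a compatible sequence of integers:
  x k is a representative of its residue modulo l^k, and x (Suc k) = x k (mod l^k).\<close>
definition padic_int :: "int \<Rightarrow> (nat \<Rightarrow> int) \<Rightarrow> bool" where
  "padic_int l x \<longleftrightarrow> (\<forall>k. [x (Suc k) = x k] (mod l ^ k))"

definition padic_nonzero :: "int \<Rightarrow> (nat \<Rightarrow> int) \<Rightarrow> bool" where
  "padic_nonzero l x \<longleftrightarrow> (\<exists>k. \<not> (l ^ k dvd x k))"

text \<open>The quartic C_d : d w^2 = d^2 + 2(p+q) D d z^2 + 4 D^2 z^4.\<close>
definition Cd_rhs :: "int \<Rightarrow> int \<Rightarrow> int \<Rightarrow> int \<Rightarrow> 'a::comm_ring_1 \<Rightarrow> 'a \<Rightarrow> 'a" where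
  "Cd_rhs p q D d u z =
     of_int (d^2) * u^4 + of_int (2*(p+q)*D*d) * u^2 * z^2 + of_int (4*D^2) * z^4"

definition Cd_real_point :: "int \<Rightarrow> int \<Rightarrow> int \<Rightarrow> int \<Rightarrow> bool" where
  "Cd_real_point p q D d \<longleftrightarrow>
     (\<exists>w z::real. of_int d * w^2 = Cd_rhs p q D d 1 z)"

text \<open>C_d has a Q_l-point: writing z = Z/U, w = W/U^2 with l-adic integers U \<noteq> 0, Z, W
  (every element of Q_l is a quotient of l-adic integers), this is the existence of
  l-adic integers U \<noteq> 0, Z, W with d W^2 = d^2 U^4 + 2(p+q)Dd U^2 Z^2 + 4D^2 Z^4.\<close>
definition Cd_padic_point :: "int \<Rightarrow> int \<Rightarrow> int \<Rightarrow> int \<Rightarrow> int \<Rightarrow> bool" where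
  "Cd_padic_point l p q D d \<longleftrightarrow>
     (\<exists>U Z W. padic_int l U \<and> padic_int l Z \<and> padic_int l W \<and> padic_nonzero l U \<and>
        (\<forall>k. [d * (W k)^2 = Cd_rhs p q D d (U k) (Z k)] (mod l ^ k)))"

text \<open>phi-Selmer group, as a set of squarefree integer representatives in Q(S,2),
  where S = {infinity, 2, p, q, D_1, ..., D_n} and Ds = {D_1,...,D_n}.\<close>
definition phi_selmer :: "int \<Rightarrow> int \<Rightarrow> int set \<Rightarrow> int set" where
  "phi_selmer p q Ds =
     {d::int. d \<noteq> 0 \<and> squarefree d \<and>
        (\<forall>l. prime l \<and> l dvd d \<longrightarrow> l \<in> {2, p, q} \<union> Ds) \<and>
        Cd_real_point p q (\<Prod>Ds) d \<and>
        (\<forall>l \<in> {2, p, q} \<union> Ds. Cd_padic_point l p q (\<Prod>Ds) d)}"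

definition Pi_minus :: "int \<Rightarrow> int \<Rightarrow> int set \<Rightarrow> int \<Rightarrow> int" where
  "Pi_minus p q Ds Di =
     (1 - Legendre p Di) + (1 - Legendre q Di) + (\<Sum>Dj \<in> Ds - {Di}. (1 - Legendre Dj Di))"

definition rho_minus :: "int \<Rightarrow> int \<Rightarrow> int set \<Rightarrow> int" where
  "rho_minus p q Ds = (\<Sum>Di \<in> Ds. \<lfloor>1 / (1 + real_of_int (Pi_minus p q Ds Di))\<rfloor>)"

end

theory Submission
  imports Defs
begin

lemma hensel_gen:
  fixes f f' :: "int \<Rightarrow> int" and l a :: int
  assumes l: "prime l"
    and taylor: "\<And>x h. \<exists>g. f (x + h) = f x + h * f' x + h^2 * g"
    and der: "\<And>x h. h dvd (f' (x + h) - f' x)"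
    and fa: "l dvd f a" and f'a: "\<not> l dvd f' a"
  shows "\<exists>X. padic_int l X \<and> (\<forall>k. l^k dvd f (X k)) \<and> (\<forall>k. [X k = a] (mod l))"
proof -
  define P where "P n x \<longleftrightarrow> l^(Suc n) dvd f x \<and> [x = a] (mod l)" for n x
  define Q where "Q n x y \<longleftrightarrow> [y = x] (mod l^(Suc n))" for n x y
  have 1: "\<exists>x. P 0 x" using fa unfolding P_def by auto
  have 2: "\<exists>y. P (Suc n) y \<and> Q n x y" if Px: "P n x" for x n
  proof -
    from Px obtain m where m: "f x = l^(Suc n) * m" and xa: "[x = a] (mod l)"
      unfolding P_def by auto
    have "l dvd f' x - f' a"
    proof -
      have "(x - a) dvd f' (a + (x - a)) - f' a" by (rule der)
      moreover have "l dvd x - a" using xa by (simp add: cong_iff_dvd_diff)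
      ultimately show ?thesis by (metis add.commute diff_add_cancel dvd_trans)
    qed
    hence "\<not> l dvd f' x" using f'a by (metis dvd_add_right_iff diff_add_cancel)
    hence "coprime (f' x) l" using l by (simp add: prime_imp_coprime coprime_commute)
    then obtain v where v: "[f' x * v = 1] (mod l)" using cong_solve_coprime_int by blast
    define t where "t = - m * v"
    define y where "y = x + l^(Suc n) * t"
    obtain g where g: "f y = f x + (l^(Suc n) * t) * f' x + (l^(Suc n) * t)^2 * g"
      using taylor unfolding y_def by blast
    have "l dvd m + t * f' x"
    proof -
      have "[m * (f' x * v) = m * 1] (mod l)" using v by (rule cong_scalar_left)
      hence "l dvd m * (f' x * v) - m" by (simp add: cong_iff_dvd_diff)
      moreover have "m + t * f' x = - (m * (f' x * v) - m)" unfolding t_def by (simp add: algebra_simps)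
      ultimately show ?thesis by (metis dvd_minus_iff)
    qed
    then obtain w where w: "m + t * f' x = l * w" by blast
    have "f y = l^(Suc (Suc n)) * (w + l^n * t^2 * g)"
      using g m w by (simp add: algebra_simps power2_eq_square)
      (metis (no_types, lifting) distrib_left mult.assoc mult.commute)
    hence "l^(Suc (Suc n)) dvd f y" by simp
    moreover have "[y = x] (mod l^(Suc n))" unfolding y_def by (simp add: cong_iff_dvd_diff)
    moreover have "[y = a] (mod l)"
    proof -
      have "[y = x] (mod l)" unfolding y_def by (simp add: cong_iff_dvd_diff)
      thus ?thesis using xa cong_trans by blast
    qed
    ultimately show ?thesis unfolding P_def Q_def by blast
  qed
  obtain X where X: "\<forall>n. P n (X n) \<and> Q n (X n) (X (Suc n))"
    using dependent_nat_choice[of P Q, OF 1 2] by blast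
  have "padic_int l X" unfolding padic_int_def
  proof
    fix k
    have "[X (Suc k) = X k] (mod l^(Suc k))" using X unfolding Q_def by blast
    moreover have "l^k dvd l^(Suc k)" by (simp add: le_imp_power_dvd)
    ultimately show "[X (Suc k) = X k] (mod l^k)" using cong_dvd_modulus by blast
  qed
  moreover have "\<forall>k. l^k dvd f (X k)"
  proof
    fix k have "l^(Suc k) dvd f (X k)" using X unfolding P_def by blast
    thus "l^k dvd f (X k)" using dvd_trans le_imp_power_dvd by (metis le_SucI order_refl)
  qed
  moreover have "\<forall>k. [X k = a] (mod l)" using X unfolding P_def by blast
  ultimately show ?thesis by blast
qed

lemma hensel_quad:
  fixes l \<alpha> \<beta> \<gamma> x0 :: int
  assumes l: "prime l" and "l dvd \<alpha> * x0^2 + \<beta> * x0 + \<gamma>" and "\<not> l dvd 2 * \<alpha> * x0 + \<beta>"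
  shows "\<exists>X. padic_int l X \<and> (\<forall>k. l^k dvd \<alpha> * (X k)^2 + \<beta> * X k + \<gamma>) \<and> (\<forall>k. [X k = x0] (mod l))"
proof -
  have t: "\<exists>g. (\<lambda>w. \<alpha> * w^2 + \<beta> * w + \<gamma>) (x + h) = (\<lambda>w. \<alpha> * w^2 + \<beta> * w + \<gamma>) x + h * (\<lambda>w. 2 * \<alpha> * w + \<beta>) x + h^2 * g" for x h
    by (rule exI[of _ \<alpha>]) (simp add: algebra_simps power2_eq_square)
  have d: "h dvd ((\<lambda>w. 2 * \<alpha> * w + \<beta>) (x + h) - (\<lambda>w. 2 * \<alpha> * w + \<beta>) x)" for x h
    by (simp add: algebra_simps)
  show ?thesis using hensel_gen[OF l t d] assms(2,3) by simp
qed

lemma hensel_quart: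
  fixes l \<alpha> \<beta> \<gamma> x0 :: int
  assumes l: "prime l" and "l dvd \<alpha> * x0^4 + \<beta> * x0^2 + \<gamma>" and "\<not> l dvd 4 * \<alpha> * x0^3 + 2 * \<beta> * x0"
  shows "\<exists>X. padic_int l X \<and> (\<forall>k. l^k dvd \<alpha> * (X k)^4 + \<beta> * (X k)^2 + \<gamma>) \<and> (\<forall>k. [X k = x0] (mod l))"
proof -
  have t: "\<exists>g. (\<lambda>w. \<alpha> * w^4 + \<beta> * w^2 + \<gamma>) (x + h) = (\<lambda>w. \<alpha> * w^4 + \<beta> * w^2 + \<gamma>) x + h * (\<lambda>w. 4 * \<alpha> * w^3 + 2 * \<beta> * w) x + h^2 * g" for x h
    by (rule exI[of _ "\<alpha> * (6*x^2 + 4*x*h + h^2) + \<beta>"]) (simp add: algebra_simps power2_eq_square power3_eq_cube power4_eq_xxxx)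
  have d: "h dvd ((\<lambda>w. 4 * \<alpha> * w^3 + 2 * \<beta> * w) (x + h) - (\<lambda>w. 4 * \<alpha> * w^3 + 2 * \<beta> * w) x)" for x h
  proof -
    have "(\<lambda>w. 4 * \<alpha> * w^3 + 2 * \<beta> * w) (x + h) - (\<lambda>w. 4 * \<alpha> * w^3 + 2 * \<beta> * w) x
       = h * (4 * \<alpha> * (3*x^2 + 3*x*h + h^2) + 2 * \<beta>)"
      by (simp add: algebra_simps power2_eq_square power3_eq_cube)
    thus ?thesis by simp
  qed
  show ?thesis using hensel_gen[OF l t d] assms(2,3) by simp
qed

lemma padic_int_const: "padic_int l (\<lambda>_. c)" unfolding padic_int_def by simp

lemma padic_nonzero_1: "prime l \<Longrightarrow> padic_nonzero l (\<lambda>_. 1)"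
  unfolding padic_nonzero_def using prime_gt_1_int[of l] by (intro exI[of _ 1]) simp

lemma Cd_rhs_int: "Cd_rhs p q D d (u::int) z = d^2 * u^4 + 2*(p+q)*D*d * u^2 * z^2 + 4*D^2 * z^4"
  unfolding Cd_rhs_def by simp

lemma point_odd_sqrt:
  fixes l p q D d w0 :: int
  assumes l: "prime l" and l2: "\<not> l dvd 2" and ld: "\<not> l dvd d" and w0: "[w0^2 = d] (mod l)"
  shows "Cd_padic_point l p q D d"
proof -
  have "l dvd d * w0^2 + 0 * w0 + (-(d^2))"
  proof -
    have "[d * w0^2 = d * d] (mod l)" using w0 by (rule cong_scalar_left)
    thus ?thesis by (simp add: cong_iff_dvd_diff power2_eq_square)
  qed
  moreover have "\<not> l dvd 2 * d * w0 + 0"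
  proof
    assume "l dvd 2 * d * w0 + 0"
    hence "l dvd 2 \<or> l dvd d \<or> l dvd w0" using l by (simp add: prime_dvd_mult_iff)
    moreover have "l dvd w0 \<Longrightarrow> l dvd d"
    proof -
      assume "l dvd w0" hence "l dvd w0^2" by (simp add: power2_eq_square)
      thus "l dvd d" using w0 by (metis cong_dvd_iff)
    qed
    ultimately show False using l2 ld by blast
  qed
  ultimately obtain X where X: "padic_int l X" "\<forall>k. l^k dvd d * (X k)^2 + 0 * X k + (-(d^2))"
    using hensel_quad[OF l] by blast
  show ?thesis unfolding Cd_padic_point_def
    apply (rule exI[of _ "\<lambda>_. 1"], rule exI[of _ "\<lambda>_. 0"], rule exI[of _ X])
    using X padic_int_const padic_nonzero_1[OF l] by (simp add: Cd_rhs_int cong_iff_dvd_diff power2_eq_square)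
qed

lemma point_2adic:
  fixes p q D d a c lam M U0 Z0 :: int
  assumes "odd a" "[a = c] (mod 8)" "padic_nonzero 2 (\<lambda>_. U0)"
    and "d * lam^2 = M * a" and "Cd_rhs p q D d U0 Z0 = M * c"
  shows "Cd_padic_point 2 p q D d"
proof -
  obtain k where k: "c - a = 8 * k" using assms(2) by (metis cong_iff_dvd_diff cong_sym dvdE)
  have p2: "prime (2::int)" by simp
  have A1: "2 dvd 2*a * k^2 + a * k + (- k)"
  proof -
    have "2*a * k^2 + a * k + (- k) = 2 * (a*k^2) + (a - 1) * k" by (simp add: algebra_simps)
    moreover have "2 dvd (a - 1)" using assms(1) by simp
    hence "2 dvd (a - 1) * k" by (rule dvd_mult2)
    ultimately show ?thesis by (metis dvd_add dvd_triv_left)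
  qed
  have A2: "\<not> 2 dvd 2 * (2*a) * k + a" using assms(1) by simp
  obtain X where X: "padic_int 2 X" "\<forall>j. 2^j dvd 2*a * (X j)^2 + a * X j + (- k)"
    using hensel_quad[OF p2 A1 A2] by blast
  define W where "W j = lam * (1 + 4 * X j)" for j
  have "padic_int 2 W" using X(1) unfolding padic_int_def W_def cong_iff_dvd_diff
  proof (intro allI)
    fix j assume "\<forall>k. 2 ^ k dvd X (Suc k) - X k"
    hence "2^j dvd X (Suc j) - X j" by blast
    moreover have "lam * (1 + 4 * X (Suc j)) - lam * (1 + 4 * X j) = (4*lam) * (X (Suc j) - X j)"
      by (simp add: algebra_simps)
    ultimately show "2 ^ j dvd lam * (1 + 4 * X (Suc j)) - lam * (1 + 4 * X j)" by simp
  qed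
  moreover have "[d * (W j)^2 = Cd_rhs p q D d U0 Z0] (mod 2^j)" for j
  proof -
    have "d * (W j)^2 - Cd_rhs p q D d U0 Z0 = (8*M) * (2*a * (X j)^2 + a * X j + (- k))"
      using assms(4,5) k unfolding W_def
      by (simp add: algebra_simps power2_eq_square) (metis (no_types, opaque_lifting) mult.assoc mult.commute)
    thus ?thesis using X(2) by (simp add: cong_iff_dvd_diff)
  qed
  ultimately show ?thesis unfolding Cd_padic_point_def
    using assms(3) padic_int_const by blast
qed


lemma not_dvd4: "prime (l::int) \<Longrightarrow> \<not> l dvd 2 \<Longrightarrow> \<not> l dvd 4"
  using prime_dvd_mult_iff[of l 2 2] by simp

lemma point_quartic:
  fixes l p q D1 d1 s r e :: int
  assumes l: "prime l" and l2: "\<not> l dvd 2" and lD1: "\<not> l dvd D1" and ld1: "\<not> l dvd d1"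
    and lp: "\<not> l dvd p" and lq: "\<not> l dvd q" and qp: "q = p + 2"
    and s: "[s^2 = p] (mod l)" and r: "[r^2 = q] (mod l)" and e: "[e^2 = -(d1*D1)] (mod l)"
  shows "Cd_padic_point l p q (l*D1) (l*d1)"
proof -
  have "\<not> l dvd 2*D1" using l l2 lD1 by (simp add: prime_dvd_mult_iff)
  hence "coprime (2*D1) l" using l prime_imp_coprime coprime_commute by blast
  then obtain i where i: "[2*D1*i = 1] (mod l)" using cong_solve_coprime_int by blast
  define m where "m = D1 * d1"
  define Y where "Y = (s+r)*e"
  define z0 where "z0 = Y * i"
  define G where "G z = (4*D1^2) * z^4 + (2*(p+q)*D1*d1) * z^2 + d1^2" for z
  have lm: "\<not> l dvd m" using l lD1 ld1 unfolding m_def by (simp add: prime_dvd_mult_iff)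
  have c2: "[2*D1*z0 = Y] (mod l)"
  proof -
    have "[Y * (2*D1*i) = Y * 1] (mod l)" using i by (rule cong_scalar_left)
    thus ?thesis unfolding z0_def by (simp add: ac_simps)
  qed
  have c3: "[Y^2 = -((s+r)^2 * m)] (mod l)"
  proof -
    have "[(s+r)^2 * e^2 = (s+r)^2 * (-(d1*D1))] (mod l)" using e by (rule cong_scalar_left)
    thus ?thesis unfolding Y_def m_def by (simp add: power_mult_distrib ac_simps)
  qed
  have sr: "[s^2 - r^2 = p - q] (mod l)" using s r by (rule cong_diff)
  have s': "[p = s^2] (mod l)" using s by (rule cong_sym)
  have r': "[q = r^2] (mod l)" using r by (rule cong_sym)
  have c4: "[4*D1^2 * G z0 = 0] (mod l)"
  proof -
    define H2 where "H2 = (Y^2)^2 + 2*(p+q)*m*Y^2 + 4*m^2"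
    define H3 where "H3 = (-((s+r)^2 * m))^2 + 2*(p+q)*m*(-((s+r)^2 * m)) + 4*m^2"
    define H4 where "H4 = (-((s+r)^2 * m))^2 + 2*(s^2+r^2)*m*(-((s+r)^2 * m)) + 4*m^2"
    have e1: "4*D1^2 * G z0 = ((2*D1*z0)^2)^2 + 2*(p+q)*m*(2*D1*z0)^2 + 4*m^2"
      unfolding G_def m_def by (simp add: algebra_simps power2_eq_square power4_eq_xxxx)
    have e2: "[((2*D1*z0)^2)^2 + 2*(p+q)*m*(2*D1*z0)^2 + 4*m^2 = H2] (mod l)"
      unfolding H2_def by (intro cong_add cong_mult cong_pow cong_refl c2)
    have e3: "[H2 = H3] (mod l)"
      unfolding H2_def H3_def by (intro cong_add cong_mult cong_pow cong_refl c3)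
    have e4: "[H3 = H4] (mod l)"
      unfolding H3_def H4_def by (intro cong_add cong_mult cong_pow cong_refl s' r')
    have e5: "H4 = m^2 * (4 - (s^2 - r^2)^2)"
      unfolding H4_def by (simp add: algebra_simps power2_eq_square power4_eq_xxxx)
    have e6: "[m^2 * (4 - (s^2 - r^2)^2) = m^2 * (4 - (p - q)^2)] (mod l)"
      by (intro cong_add cong_mult cong_pow cong_refl cong_diff sr)
    have e7: "m^2 * (4 - (p - q)^2) = 0" using qp by simp
    show ?thesis using e1 e2 e3 e4 e5 e6 e7 by (metis cong_trans)
  qed
  have G0: "l dvd G z0"
  proof -
    have "l dvd 4*D1^2 * G z0" using c4 by (simp add: cong_0_iff)
    moreover have "\<not> l dvd 4*D1^2"
    proof
      assume "l dvd 4*D1^2"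
      hence "l dvd 2*2*(D1*D1)" by (simp add: power2_eq_square)
      thus False using l l2 lD1 by (metis prime_dvd_mult_iff)
    qed
    ultimately show ?thesis using l by (simp add: prime_dvd_mult_iff)
  qed
  have nz0: "\<not> l dvd z0"
  proof
    assume "l dvd z0"
    hence "l dvd s + r \<or> l dvd e \<or> l dvd i" using l unfolding z0_def Y_def by (simp add: prime_dvd_mult_iff)
    moreover have "\<not> l dvd s + r"
    proof
      assume "l dvd s + r"
      hence "l dvd (s+r)*(s-r)" by simp
      moreover have "(s+r)*(s-r) = s^2 - r^2" by (simp add: algebra_simps power2_eq_square)
      ultimately have "l dvd p - q" using sr by (metis cong_dvd_iff)
      thus False using qp l2 by simp
    qed
    moreover have "\<not> l dvd e"
    proof
      assume "l dvd e" hence "l dvd e^2" by (simp add: power2_eq_square)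
      hence "l dvd -(d1*D1)" using e by (metis cong_dvd_iff)
      thus False using l ld1 lD1 by (simp add: prime_dvd_mult_iff)
    qed
    moreover have "\<not> l dvd i"
    proof
      assume "l dvd i" hence "l dvd 2*D1*i" by simp
      hence "l dvd 1" using i by (metis cong_dvd_iff)
      thus False using l not_prime_unit by blast
    qed
    ultimately show False by blast
  qed
  have nK: "\<not> l dvd 4*D1*z0^2 + (p+q)*d1"
  proof
    assume "l dvd 4*D1*z0^2 + (p+q)*d1"
    hence "l dvd D1 * (4*D1*z0^2 + (p+q)*d1)" by simp
    moreover have "D1 * (4*D1*z0^2 + (p+q)*d1) = (2*D1*z0)^2 + (p+q)*m"
      unfolding m_def by (simp add: algebra_simps power2_eq_square)
    moreover have "[(2*D1*z0)^2 + (p+q)*m = Y^2 + (p+q)*m] (mod l)"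
      by (intro cong_add cong_mult cong_pow cong_refl c2)
    moreover have "[Y^2 + (p+q)*m = -((s+r)^2 * m) + (s^2+r^2)*m] (mod l)"
      by (intro cong_add cong_mult cong_pow cong_refl c3 s' r')
    moreover have "-((s+r)^2 * m) + (s^2+r^2)*m = -(2*s*r*m)"
      by (simp add: algebra_simps power2_eq_square)
    ultimately have "l dvd 2*s*r*m" by (metis cong_dvd_iff cong_trans dvd_minus_iff)
    hence "l dvd 2 \<or> l dvd s \<or> l dvd r \<or> l dvd m" using l by (simp add: prime_dvd_mult_iff)
    moreover have "l dvd s \<Longrightarrow> l dvd p"
    proof -
      assume "l dvd s" hence "l dvd s^2" by (simp add: power2_eq_square)
      thus ?thesis using s by (metis cong_dvd_iff)
    qed
    moreover have "l dvd r \<Longrightarrow> l dvd q"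
    proof -
      assume "l dvd r" hence "l dvd r^2" by (simp add: power2_eq_square)
      thus ?thesis using r by (metis cong_dvd_iff)
    qed
    ultimately show False using l2 lp lq lm by blast
  qed
  have G'0: "\<not> l dvd 4 * (4*D1^2) * z0^3 + 2 * (2*(p+q)*D1*d1) * z0"
  proof
    assume "l dvd 4 * (4*D1^2) * z0^3 + 2 * (2*(p+q)*D1*d1) * z0"
    moreover have "4 * (4*D1^2) * z0^3 + 2 * (2*(p+q)*D1*d1) * z0 = (2*2) * D1 * z0 * (4*D1*z0^2 + (p+q)*d1)"
      by (simp add: algebra_simps power2_eq_square power3_eq_cube)
    ultimately have "l dvd (2*2) * D1 * z0 * (4*D1*z0^2 + (p+q)*d1)" by simp
    thus False using l l2 lD1 nz0 nK not_dvd4[OF l l2] by (simp add: prime_dvd_mult_iff)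
  qed
  obtain Z where Z: "padic_int l Z" "\<forall>k. l^k dvd (4*D1^2) * (Z k)^4 + (2*(p+q)*D1*d1) * (Z k)^2 + d1^2"
    using hensel_quart[OF l G0[unfolded G_def] G'0] by blast
  have "[l*d1 * ((\<lambda>_. 0::int) k)^2 = Cd_rhs p q (l*D1) (l*d1) ((\<lambda>_. 1::int) k) (Z k)] (mod l^k)" for k
  proof -
    have "Cd_rhs p q (l*D1) (l*d1) 1 (Z k) = l^2 * ((4*D1^2) * (Z k)^4 + (2*(p+q)*D1*d1) * (Z k)^2 + d1^2)"
      by (simp add: Cd_rhs_int algebra_simps power2_eq_square)
    moreover have "l^k dvd l^2 * ((4*D1^2) * (Z k)^4 + (2*(p+q)*D1*d1) * (Z k)^2 + d1^2)"
      using Z(2) by (simp add: dvd_mult)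
    ultimately show ?thesis by (simp add: cong_iff_dvd_diff)
  qed
  thus ?thesis unfolding Cd_padic_point_def using Z(1) padic_int_const padic_nonzero_1[OF l] by blast
qed


lemma legendre_range: "Legendre a l \<in> {-1, 0, 1}"
  unfolding Legendre_def by auto

lemma legendre_cong_eq:
  fixes l x y :: int
  assumes "l > 2" "x \<in> {-1,0,1}" "y \<in> {-1,0,1}" "[x = y] (mod l)"
  shows "x = y"
proof -
  have d: "l dvd x - y" using assms(4) by (simp add: cong_iff_dvd_diff)
  have "\<not> l dvd 1" "\<not> l dvd 2" "\<not> l dvd -1" "\<not> l dvd -2" using assms(1) zdvd_imp_le[of l 1] zdvd_imp_le[of l 2]
    by auto
  thus ?thesis using assms(2,3) d by auto
qed

lemma euler_int:
  fixes l a :: int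
  assumes "prime l" "l > 2"
  shows "[Legendre a l = a ^ nat ((l - 1) div 2)] (mod l)"
proof -
  have n: "prime (nat l)" "2 < nat l" using assms by auto
  have "[Legendre a (int (nat l)) = a ^ ((nat l - 1) div 2)] (mod int (nat l))"
    using euler_criterion[OF n] by simp
  moreover have "(nat l - 1) div 2 = nat ((l - 1) div 2)" using assms by (simp add: nat_div_distrib nat_diff_distrib)
  ultimately show ?thesis using assms by simp
qed

lemma legendre_mult:
  fixes l a b :: int
  assumes "prime l" "l > 2"
  shows "Legendre (a*b) l = Legendre a l * Legendre b l"
proof -
  let ?k = "nat ((l - 1) div 2)"
  have "[Legendre (a*b) l = (a*b) ^ ?k] (mod l)" by (rule euler_int[OF assms])
  moreover have "[Legendre a l * Legendre b l = a ^ ?k * b ^ ?k] (mod l)"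
    using euler_int[OF assms] by (intro cong_mult) auto
  ultimately have "[Legendre (a*b) l = Legendre a l * Legendre b l] (mod l)"
    by (metis cong_sym cong_trans power_mult_distrib)
  moreover have "Legendre a l * Legendre b l \<in> {-1,0,1}"
    using legendre_range[of a l] legendre_range[of b l] by auto
  ultimately show ?thesis using legendre_cong_eq[OF assms(2) legendre_range] by blast
qed

lemma legendre_prod:
  fixes l :: int
  assumes "prime l" "l > 2" "finite A"
  shows "Legendre (\<Prod>x\<in>A. f x) l = (\<Prod>x\<in>A. Legendre (f x) l)"
  using assms(3)
proof (induction A rule: finite_induct)
  case empty
  have "Legendre 1 l = 1" unfolding Legendre_def QuadRes_def using assms
    by (auto simp: cong_iff_dvd_diff intro: exI[of _ 1])
  thus ?case by simp
next
  case (insert x F)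
  thus ?case by (simp add: legendre_mult[OF assms(1,2)])
qed

lemma legendre_minus_one:
  fixes l :: int
  assumes "prime l" "l > 2"
  shows "Legendre (-1) l = (-1) ^ nat ((l - 1) div 2)"
proof -
  have "(-1::int) ^ nat ((l - 1) div 2) \<in> {-1,0,1}" by (simp add: minus_one_power_iff)
  thus ?thesis using legendre_cong_eq[OF assms(2) legendre_range] euler_int[OF assms] by blast
qed

lemma legendre_one_quadres:
  "Legendre a l = 1 \<Longrightarrow> QuadRes l a \<and> \<not> l dvd a"
  unfolding Legendre_def by (auto split: if_splits simp: cong_0_iff)

context GAUSS
begin

lemma E_two:
  assumes "a = 2"
  shows "E = (\<lambda>x. x*2) ` {x. 0 < x \<and> x \<le> (int p - 1) div 2 \<and> (int p - 1) div 2 < x*2}"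
proof -
  have "C = (\<lambda>x. x*2) ` A"
    unfolding C_def B_def image_image
  proof (rule image_cong[OF refl])
    fix x assume "x \<in> A"
    hence "0 \<le> x*2" "x*2 < int p" unfolding A_def using p_eq2 by auto
    thus "x * a mod int p = x * 2" using assms by simp
  qed
  thus ?thesis unfolding E_def A_def by auto
qed

lemma card_E_two:
  assumes "a = 2"
  shows "card E = card {x. 0 < x \<and> x \<le> (int p - 1) div 2 \<and> (int p - 1) div 2 < x*2}"
  unfolding E_two[OF assms] by (rule card_image) (simp add: inj_on_def)

end

lemma legendre_two:
  fixes l :: int
  assumes l: "prime l" "l > 2"
  shows "l mod 8 \<in> {1, 7} \<Longrightarrow> Legendre 2 l = 1"
    and "l mod 8 = 3 \<Longrightarrow> Legendre 2 l = -1"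
proof -
  define n where "n = nat l"
  have ln: "l = int n" using l unfolding n_def by simp
  interpret G: GAUSS n 2
    by unfold_locales (use l ln in \<open>auto simp: cong_iff_dvd_diff dest: zdvd_imp_le\<close>)
  have gl: "Legendre 2 l = (-1) ^ card G.E" using G.gauss_lemma ln by simp
  have cE: "card G.E = card {x. 0 < x \<and> x \<le> (l - 1) div 2 \<and> (l - 1) div 2 < x*2}"
    using G.card_E_two ln by simp
  {
    assume "l mod 8 \<in> {1, 7}"
    then obtain k where k: "l = 8*k + 1 \<or> l = 8*k + 7" by (metis insertE empty_iff mult_div_mod_eq add.commute mult.commute)
    show "Legendre 2 l = 1"
    proof (cases "l = 8*k+1")
      case True
      hence "{x. 0 < x \<and> x \<le> (l - 1) div 2 \<and> (l - 1) div 2 < x*2} = {2*k<..4*k}" by auto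
      hence "card G.E = nat (2*k)" using cE by simp
      moreover have "k \<ge> 0" using True l by simp
      ultimately have "even (card G.E)" by (simp add: even_nat_iff)
      thus ?thesis using gl by simp
    next
      case False
      hence T: "l = 8*k+7" using k by blast
      hence "{x. 0 < x \<and> x \<le> (l - 1) div 2 \<and> (l - 1) div 2 < x*2} = {2*k+1<..4*k+3}" by auto
      hence "card G.E = nat (2*k+2)" using cE by simp
      moreover have "k \<ge> 0" using T l by simp
      ultimately have "even (card G.E)" by (simp add: even_nat_iff)
      thus ?thesis using gl by simp
    qed
  }
  {
    assume "l mod 8 = 3"
    then obtain k where T: "l = 8*k + 3" by (metis mult_div_mod_eq add.commute mult.commute)
    hence "{x. 0 < x \<and> x \<le> (l - 1) div 2 \<and> (l - 1) div 2 < x*2} = {2*k<..4*k+1}" by auto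
    hence "card G.E = nat (2*k+1)" using cE by simp
    moreover have "k \<ge> 0" using T l by simp
    ultimately have "odd (card G.E)" by (simp add: even_nat_iff)
    thus "Legendre 2 l = -1" using gl by simp
  }
qed

lemma legendre_minus_one_mod4:
  fixes l :: int
  assumes "prime l" "l > 2"
  shows "l mod 4 = 1 \<Longrightarrow> Legendre (-1) l = 1" and "l mod 4 = 3 \<Longrightarrow> Legendre (-1) l = -1"
proof -
  assume "l mod 4 = 1"
  then obtain k where k: "l = 4*k+1" by (metis mult_div_mod_eq add.commute mult.commute)
  hence "(l - 1) div 2 = 2*k" by simp
  moreover have "k \<ge> 0" using k assms by simp
  ultimately show "Legendre (-1) l = 1" using legendre_minus_one[OF assms]
    by (simp add: minus_one_power_iff even_nat_iff)
next
  assume "l mod 4 = 3"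
  then obtain k where k: "l = 4*k+3" by (metis mult_div_mod_eq add.commute mult.commute)
  hence "(l - 1) div 2 = 2*k+1" by simp
  moreover have "k \<ge> 0" using k assms by simp
  ultimately show "Legendre (-1) l = -1" using legendre_minus_one[OF assms]
    by (simp add: minus_one_power_iff even_nat_iff)
qed

lemma legendre_pm2:
  fixes l :: int
  assumes "prime l" "l > 2"
  shows "l mod 8 \<in> {1, 7} \<Longrightarrow> Legendre 2 l = 1"
    and "l mod 8 \<in> {1, 3} \<Longrightarrow> Legendre (-2) l = 1"
proof -
  show "l mod 8 \<in> {1, 7} \<Longrightarrow> Legendre 2 l = 1" using legendre_two[OF assms] by blast
  assume a: "l mod 8 \<in> {1, 3}"
  have m: "Legendre (-2) l = Legendre (-1) l * Legendre 2 l"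
    using legendre_mult[OF assms, of "-1" 2] by simp
  show "Legendre (-2) l = 1"
  proof (cases "l mod 8 = 1")
    case True
    hence "l mod 4 = 1" by presburger
    thus ?thesis using m True legendre_two[OF assms] legendre_minus_one_mod4[OF assms] by simp
  next
    case False
    hence "l mod 8 = 3" using a by simp
    moreover hence "l mod 4 = 3" by presburger
    ultimately show ?thesis using m legendre_two[OF assms] legendre_minus_one_mod4[OF assms] by simp
  qed
qed

definition sg :: "int \<Rightarrow> int" where "sg x = (if x mod 4 = 1 then x else -x)"

lemma legendre_sg:
  fixes x y :: int
  assumes x: "prime x" "x > 2" and y: "prime y" "y > 2" and xy: "x \<noteq> y"
    and L: "Legendre y x = 1"
  shows "Legendre (sg x) y = 1"
proof -
  have QR: "Legendre x y * Legendre y x = (-1::int) ^ (nat ((x - 1) div 2 * ((y - 1) div 2)))"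
    using Quadratic_Reciprocity_int[of x y] assms by simp
  have x4: "x mod 4 = 1 \<or> x mod 4 = 3" using x prime_odd_int[of x] by presburger
  show ?thesis
  proof (cases "x mod 4 = 1")
    case True
    then obtain k where k: "x = 4*k+1" by (metis mult_div_mod_eq add.commute mult.commute)
    have h: "(x - 1) div 2 = 2 * k" using k by simp
    have "0 \<le> (x - 1) div 2 * ((y - 1) div 2)" using x y by simp
    hence "even (nat ((x - 1) div 2 * ((y - 1) div 2)))" by (simp add: even_nat_iff h)
    thus ?thesis using QR L True unfolding sg_def by simp
  next
    case False
    hence x3: "x mod 4 = 3" using x4 by simp
    then obtain k where k: "x = 4*k+3" by (metis mult_div_mod_eq add.commute mult.commute)
    have h: "(x - 1) div 2 = 2*k+1" using k by simp
    have "0 \<le> (x - 1) div 2 * ((y - 1) div 2)" "0 \<le> (y - 1) div 2" using x y by simp_all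
    hence "even (nat ((x - 1) div 2 * ((y - 1) div 2))) = even (nat ((y - 1) div 2))"
      by (simp add: even_nat_iff h)
    hence "Legendre x y = Legendre (-1) y"
      using QR L legendre_minus_one[OF y] by (simp add: minus_one_power_iff)
    moreover have "Legendre (-x) y = Legendre (-1) y * Legendre x y"
      using legendre_mult[OF y, of "-1" x] by simp
    moreover have "Legendre (-1) y \<in> {-1, 1}"
      using legendre_minus_one[OF y] by (simp add: minus_one_power_iff)
    ultimately show ?thesis using False unfolding sg_def by auto
  qed
qed


lemma legendre_one_l: "prime (l::int) \<Longrightarrow> Legendre 1 l = 1"
  unfolding Legendre_def QuadRes_def
  by (auto simp: cong_iff_dvd_diff intro: exI[of _ 1])

lemma real_point:
  fixes p q D d :: int
  assumes "d \<noteq> 0" "D > 0" "p + q > 2"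
  shows "Cd_real_point p q D d"
proof (cases "d > 0")
  case True
  show ?thesis unfolding Cd_real_point_def Cd_rhs_def
    by (rule exI[of _ "sqrt (real_of_int d)"], rule exI[of _ 0])
       (use True in \<open>simp add: power2_eq_square\<close>)
next
  case False
  hence dn: "real_of_int d < 0" using assms(1) by simp
  define rd where "rd = real_of_int d"
  define rD where "rD = real_of_int D"
  define s where "s = real_of_int (p + q)"
  have rD: "rD > 0" using assms(2) unfolding rD_def by simp
  have s2: "s > 2" using assms(3) unfolding s_def by simp
  define t0 where "t0 = - s * rd / (4 * rD)"
  have "(- s) * rd > 0" using s2 dn rd_def by (intro mult_neg_neg) auto
  hence t0: "t0 \<ge> 0" unfolding t0_def using rD by (simp add: divide_nonpos_pos)
  define R where "R = rd^2 - s^2 * rd^2 / 4"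
  have "2*2 < s*s" using s2 by (intro mult_strict_mono) auto
  hence "s^2 > 4" by (simp add: power2_eq_square)
  hence "R < 0" unfolding R_def using dn rd_def by (simp add: field_simps)
  hence Rd: "R / rd \<ge> 0" using dn rd_def by (simp add: divide_nonpos_neg)
  define z where "z = sqrt t0"
  define w where "w = sqrt (R / rd)"
  have z2: "z^2 = t0" unfolding z_def using t0 by simp
  have z4: "z^4 = t0^2" using z2 by (metis power_mult numeral_Bit0 mult_2 power2_eq_square numeral_times_numeral num_double power_even_eq)
  have w2: "w^2 = R / rd" unfolding w_def using Rd by simp
  have "rd * w^2 = R" using w2 dn rd_def by simp
  also have "R = rd^2 + 2 * s * rD * rd * t0 + 4 * rD^2 * t0^2"
    unfolding R_def t0_def using rD by (simp add: field_simps power2_eq_square)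
  finally have "rd * w^2 = rd^2 * 1^4 + (2 * s * rD * rd) * 1^2 * z^2 + (4 * rD^2) * z^4"
    using z2 z4 by simp
  thus ?thesis unfolding Cd_real_point_def Cd_rhs_def rd_def rD_def s_def
    by (intro exI[of _ w] exI[of _ z]) (simp add: algebra_simps)
qed


lemma prod_mod_closed:
  fixes f :: "int \<Rightarrow> int" and m :: int
  assumes "finite S" "\<forall>x\<in>S. f x mod m \<in> M" "1 mod m \<in> M" "\<forall>a\<in>M. \<forall>b\<in>M. (a*b) mod m \<in> M"
  shows "(\<Prod>x\<in>S. f x) mod m \<in> M"
  using assms(1,2)
proof (induction S rule: finite_induct)
  case empty thus ?case using assms(3) by simp
next
  case (insert x F)
  have "(\<Prod>x\<in>insert x F. f x) mod m = ((f x mod m) * ((\<Prod>x\<in>F. f x) mod m)) mod m"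
    using insert(1,2) by (simp add: mod_mult_eq)
  thus ?case using insert assms(4) by auto
qed

locale twin =
  fixes p q :: int and Ds :: "int set"
  assumes hp: "prime p" and hq: "prime q" and op: "odd p" and oq: "odd q" and qp: "q - p = 2"
    and fin: "finite Ds" and prs: "\<forall>Di \<in> Ds. prime Di"
    and oD: "odd (\<Prod>Ds)" and pD: "\<not> p dvd (\<Prod>Ds)" and qD: "\<not> q dvd (\<Prod>Ds)"
begin

lemma p2: "p > 2" using hp op prime_ge_2_int[of p] by (cases "p = 2") auto
lemma q2: "q > 2" using qp p2 by simp

lemma Ds_facts:
  assumes "x \<in> Ds"
  shows "prime x" "x > 2" "x \<noteq> p" "x \<noteq> q" "x dvd \<Prod>Ds" "odd x"
proof -
  show px: "prime x" using assms prs by blast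
  show xd: "x dvd \<Prod>Ds" using dvd_prodI[OF fin assms, of "\<lambda>x. x"] by simp
  show ox: "odd x" using xd oD by (meson dvd_trans)
  show "x > 2" using px ox prime_ge_2_int[of x] by (cases "x = 2") auto
  show "x \<noteq> p" using xd pD by blast
  show "x \<noteq> q" using xd qD by blast
qed

lemma D_split:
  assumes "x \<in> Ds"
  shows "\<Prod>Ds = x * \<Prod>(Ds - {x})" "\<not> x dvd \<Prod>(Ds - {x})"
proof -
  show "\<Prod>Ds = x * \<Prod>(Ds - {x})" using assms fin by (simp add: prod.remove)
  show "\<not> x dvd \<Prod>(Ds - {x})"
  proof
    assume "x dvd \<Prod>(Ds - {x})"
    then obtain y where "y \<in> Ds - {x}" "x dvd y"
      using prime_dvd_prod_iff[of "Ds - {x}" x id] fin Ds_facts(1)[OF assms] by auto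
    thus False using primes_dvd_imp_eq[of x y] Ds_facts(1)[OF assms] prs by auto
  qed
qed

lemma D_pos: "\<Prod>Ds > 0"
  using fin prs by (intro prod_pos) (auto dest: prime_gt_0_int)

definition T where "T = {x \<in> Ds. Pi_minus p q Ds x = 0}"

lemma T_sub: "T \<subseteq> Ds" unfolding T_def by auto

lemma Pi_terms_nonneg: "1 - Legendre a b \<ge> 0"
  using legendre_range[of a b] by auto

lemma Pi_nonneg: "Pi_minus p q Ds x \<ge> 0"
  unfolding Pi_minus_def using Pi_terms_nonneg by (intro add_nonneg_nonneg sum_nonneg) auto

lemma T_props:
  assumes "x \<in> T"
  shows "Legendre p x = 1" "Legendre q x = 1" "\<And>y. y \<in> Ds - {x} \<Longrightarrow> Legendre y x = 1"
proof -
  have z: "(1 - Legendre p x) + (1 - Legendre q x) + (\<Sum>Dj \<in> Ds - {x}. (1 - Legendre Dj x)) = 0"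
    using assms unfolding T_def Pi_minus_def by simp
  have n1: "1 - Legendre p x \<ge> 0" "1 - Legendre q x \<ge> 0" "(\<Sum>Dj \<in> Ds - {x}. (1 - Legendre Dj x)) \<ge> 0"
    using Pi_terms_nonneg by (auto intro: sum_nonneg)
  hence e: "1 - Legendre p x = 0" "1 - Legendre q x = 0" "(\<Sum>Dj \<in> Ds - {x}. (1 - Legendre Dj x)) = 0"
    using z by linarith+
  show "Legendre p x = 1" "Legendre q x = 1" using e by auto
  fix y assume "y \<in> Ds - {x}"
  thus "Legendre y x = 1" using e(3) fin sum_nonneg_eq_0_iff[of "Ds - {x}" "\<lambda>Dj. 1 - Legendre Dj x"] Pi_terms_nonneg
    by auto
qed

lemma rho: "rho_minus p q Ds = int (card T)"
proof -
  have f: "\<lfloor>1 / (1 + real_of_int (Pi_minus p q Ds x))\<rfloor> = (if Pi_minus p q Ds x = 0 then 1 else 0)" for x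
  proof (cases "Pi_minus p q Ds x = 0")
    case True thus ?thesis by simp
  next
    case False
    hence "Pi_minus p q Ds x \<ge> 1" using Pi_nonneg[of x] by simp
    hence "real_of_int (Pi_minus p q Ds x) \<ge> 1" by linarith
    hence "0 \<le> 1 / (1 + real_of_int (Pi_minus p q Ds x))" "1 / (1 + real_of_int (Pi_minus p q Ds x)) < 1"
      by (auto simp: field_simps)
    thus ?thesis using False by (simp add: floor_eq_iff)
  qed
  have "rho_minus p q Ds = (\<Sum>x\<in>Ds. if Pi_minus p q Ds x = 0 then 1 else 0)"
    unfolding rho_minus_def using f by simp
  also have "\<dots> = (\<Sum>x\<in>T. 1)" unfolding T_def using sum.inter_filter[OF fin, of "\<lambda>_. 1::int"] by simp
  finally show ?thesis by simp
qed

lemma sg_facts: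
  assumes "x \<in> Ds"
  shows "sg x \<in> {x, -x}" "sg x mod 4 = 1" "odd (sg x)" "sg x \<noteq> 0" "x dvd sg x"
proof -
  have ox: "odd x" "x > 2" using Ds_facts[OF assms] by auto
  show "sg x \<in> {x, -x}" "odd (sg x)" "sg x \<noteq> 0" "x dvd sg x" using ox by (auto simp: sg_def)
  show "sg x mod 4 = 1" unfolding sg_def using ox(1) by presburger
qed

lemma leg_sg_T:
  assumes "x \<in> T" "l \<in> {p, q} \<union> Ds" "l \<noteq> x"
  shows "Legendre (sg x) l = 1"
proof -
  have xD: "x \<in> Ds" using assms(1) T_sub by blast
  have l: "prime l" "l > 2" using assms(2) hp hq p2 q2 Ds_facts by auto
  have "Legendre l x = 1" using assms T_props[OF assms(1)] by auto
  thus ?thesis using legendre_sg[of x l] Ds_facts[OF xD] l assms(3) by auto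
qed

end


context twin
begin

lemma odd_prime_not_dvd2: "prime (l::int) \<Longrightarrow> l > 2 \<Longrightarrow> \<not> l dvd 2"
  using zdvd_imp_le[of l 2] by auto

lemma member:
  assumes A: "A \<subseteq> T" and t0: "t0 \<in> {1, 2, -2}"
    and Lt: "\<forall>l \<in> {p, q} \<union> Ds. Legendre t0 l = 1"
    and two: "Cd_padic_point 2 p q (\<Prod>Ds) (t0 * (\<Prod>x\<in>A. sg x))"
  shows "t0 * (\<Prod>x\<in>A. sg x) \<in> phi_selmer p q Ds"
proof -
  define d where "d = t0 * (\<Prod>x\<in>A. sg x)"
  have AD: "A \<subseteq> Ds" using A T_sub by blast
  have finA: "finite A" using AD fin finite_subset by blast
  have pr0: "(\<Prod>x\<in>A. sg x) \<noteq> 0" using finA AD sg_facts by auto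
  have d0: "d \<noteq> 0" unfolding d_def using t0 pr0 by auto
  have oddpr: "odd (\<Prod>x\<in>A. sg x)" using prime_dvd_prod_iff[OF finA, of 2 sg] sg_facts AD by auto
  have sq1: "squarefree (\<Prod>x\<in>A. sg x)"
  proof (rule squarefree_prod_coprime)
    fix a b assume ab: "a \<in> A" "b \<in> A" "a \<noteq> b"
    hence "coprime a b" using AD Ds_facts by (intro primes_coprime) auto
    thus "coprime (sg a) (sg b)" unfolding sg_def by auto
  next
    fix a assume "a \<in> A"
    hence "prime a" using AD Ds_facts by auto
    thus "squarefree (sg a)" unfolding sg_def by (auto intro: squarefree_prime)
  qed
  have sqd: "squarefree d"
  proof -
    have "squarefree (2::int)" by (rule squarefree_prime) simp
    hence "squarefree t0" using t0 by auto
    moreover have "coprime t0 (\<Prod>x\<in>A. sg x)"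
    proof -
      have "coprime 2 (\<Prod>x\<in>A. sg x)"
        using oddpr prime_imp_coprime[of "2::int"] by auto
      thus ?thesis using t0 by auto
    qed
    ultimately show ?thesis unfolding d_def using sq1 by (intro squarefree_mult_coprime)
  qed
  have pdiv: "\<forall>l. prime l \<and> l dvd d \<longrightarrow> l \<in> {2, p, q} \<union> Ds"
  proof (intro allI impI)
    fix l :: int assume l: "prime l \<and> l dvd d"
    hence "l dvd t0 \<or> l dvd (\<Prod>x\<in>A. sg x)" unfolding d_def using prime_dvd_mult_iff by blast
    thus "l \<in> {2, p, q} \<union> Ds"
    proof
      assume "l dvd t0"
      hence "l dvd 2" using t0 l by auto
      hence "l = 2" using l primes_dvd_imp_eq[of l 2] by auto
      thus ?thesis by simp
    next
      assume "l dvd (\<Prod>x\<in>A. sg x)"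
      then obtain x where x: "x \<in> A" "l dvd sg x" using prime_dvd_prod_iff[OF finA, of l sg] l by auto
      have "sg x = x \<or> sg x = -x" using sg_facts(1)[of x] x AD by auto
      hence "l dvd x" using x(2) by auto
      hence "l = x" using primes_dvd_imp_eq[of l x] l Ds_facts x AD by auto
      thus ?thesis using x AD by auto
    qed
  qed
  have real: "Cd_real_point p q (\<Prod>Ds) d" using real_point[OF d0 D_pos] p2 q2 by simp
  have loc: "Cd_padic_point l p q (\<Prod>Ds) d" if lS: "l \<in> {2, p, q} \<union> Ds" for l
  proof (cases "l = 2")
    case True thus ?thesis using two unfolding d_def by simp
  next
    case False
    hence lS': "l \<in> {p, q} \<union> Ds" using lS by auto
    have lp: "prime l" "l > 2" using lS' hp hq p2 q2 Ds_facts by auto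
    have l2: "\<not> l dvd 2" using odd_prime_not_dvd2 lp by blast
    show ?thesis
    proof (cases "l \<in> A")
      case False
      have "Legendre d l = Legendre t0 l * (\<Prod>x\<in>A. Legendre (sg x) l)"
        unfolding d_def using legendre_mult[OF lp] legendre_prod[OF lp finA] by simp
      also have "\<dots> = 1"
      proof -
        have "\<forall>x\<in>A. Legendre (sg x) l = 1"
        proof
          fix x assume "x \<in> A" thus "Legendre (sg x) l = 1" using leg_sg_T[of x l] A False lS' by auto
        qed
        hence "(\<Prod>x\<in>A. Legendre (sg x) l) = 1" by (rule prod.neutral)
        thus ?thesis using Lt lS' by auto
      qed
      finally have "QuadRes l d \<and> \<not> l dvd d" by (rule legendre_one_quadres)
      then obtain w0 where "[w0^2 = d] (mod l)" "\<not> l dvd d" unfolding QuadRes_def by blast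
      thus ?thesis using point_odd_sqrt[OF lp(1) l2] by blast
    next
      case True
      have lT: "l \<in> T" using True A by blast
      have lD: "l \<in> Ds" using lT T_sub by blast
      define \<sigma> where "\<sigma> = (if l mod 4 = 1 then 1 else -1::int)"
      have sgl: "sg l = \<sigma> * l" unfolding sg_def \<sigma>_def by simp
      define d1 where "d1 = t0 * \<sigma> * (\<Prod>x\<in>A - {l}. sg x)"
      define D1 where "D1 = \<Prod>(Ds - {l})"
      have dd: "d = l * d1" unfolding d_def d1_def using prod.remove[OF finA True, of sg] sgl
        by (simp add: ac_simps)
      have DD: "\<Prod>Ds = l * D1" unfolding D1_def using D_split[OF lD] by simp
      have finA': "finite (A - {l})" using finA by simp
      have L1: "Legendre (-\<sigma>) l = 1"
      proof (cases "l mod 4 = 1")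
        case True thus ?thesis unfolding \<sigma>_def using legendre_minus_one_mod4(1)[OF lp] by simp
      next
        case False thus ?thesis unfolding \<sigma>_def using legendre_one_l[OF lp(1)] by simp
      qed
      have L2: "Legendre (\<Prod>x\<in>A - {l}. sg x) l = 1"
      proof -
        have "\<forall>x\<in>A - {l}. Legendre (sg x) l = 1"
        proof
          fix x assume "x \<in> A - {l}" thus "Legendre (sg x) l = 1" using leg_sg_T[of x l] A lS' by auto
        qed
        hence "(\<Prod>x\<in>A - {l}. Legendre (sg x) l) = 1" by (rule prod.neutral)
        thus ?thesis using legendre_prod[OF lp finA'] by simp
      qed
      have L3: "Legendre D1 l = 1"
      proof -
        have "(\<Prod>x\<in>Ds - {l}. Legendre x l) = 1" using T_props(3)[OF lT] by (intro prod.neutral) auto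
        thus ?thesis unfolding D1_def using legendre_prod[OF lp, of "Ds - {l}" "\<lambda>x. x"] fin by simp
      qed
      have eq: "-(d1*D1) = (-\<sigma>) * t0 * (\<Prod>x\<in>A - {l}. sg x) * D1" unfolding d1_def by (simp add: ac_simps)
      have Lt0: "Legendre t0 l = 1" using Lt lS' by blast
      have "Legendre ((-\<sigma>) * t0 * (\<Prod>x\<in>A - {l}. sg x) * D1) l
          = Legendre (-\<sigma>) l * Legendre t0 l * Legendre (\<Prod>x\<in>A - {l}. sg x) l * Legendre D1 l"
        by (simp only: legendre_mult[OF lp])
      hence "Legendre (-(d1*D1)) l = 1" unfolding eq using L1 L2 L3 Lt0 by simp
      hence "QuadRes l (-(d1*D1)) \<and> \<not> l dvd (-(d1*D1))" by (rule legendre_one_quadres)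
      hence ndd: "\<not> l dvd d1 * D1" and "QuadRes l (-(d1*D1))" by auto
      then obtain e where e: "[e^2 = -(d1*D1)] (mod l)" unfolding QuadRes_def by blast
      have nd: "\<not> l dvd d1" "\<not> l dvd D1" using ndd by (meson dvd_mult dvd_mult2)+
      have "QuadRes l p \<and> \<not> l dvd p" using T_props(1)[OF lT] by (rule legendre_one_quadres)
      then obtain s where s: "[s^2 = p] (mod l)" and lpp: "\<not> l dvd p" unfolding QuadRes_def by blast
      have "QuadRes l q \<and> \<not> l dvd q" using T_props(2)[OF lT] by (rule legendre_one_quadres)
      then obtain r where r: "[r^2 = q] (mod l)" and lqq: "\<not> l dvd q" unfolding QuadRes_def by blast
      have "q = p + 2" using qp by simp
      from point_quartic[OF lp(1) l2 nd(2) nd(1) lpp lqq this s r e]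
      show ?thesis using dd DD by simp
    qed
  qed
  show ?thesis unfolding phi_selmer_def d_def[symmetric] using d0 sqd pdiv real loc by blast
qed

end


lemma padic_nonzero_2: "padic_nonzero 2 (\<lambda>_. 2::int)"
  unfolding padic_nonzero_def by (rule exI[of _ 2]) simp

context twin
begin

lemma prod_sg_mod4:
  assumes "A \<subseteq> Ds"
  shows "(\<Prod>x\<in>A. sg x) mod 4 = 1"
proof -
  have "finite A" using assms fin finite_subset by blast
  thus ?thesis using prod_mod_closed[of A sg 4 "{1}"] sg_facts(2) assms by auto
qed

lemma pq4: "\<exists>w. p + q = 4*w"
proof -
  obtain k where "p = 2*k+1" using op oddE by blast
  thus ?thesis using qp by (intro exI[of _ "k+1"]) simp
qed

lemma two1:
  assumes "A \<subseteq> T"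
  shows "Cd_padic_point 2 p q (\<Prod>Ds) (1 * (\<Prod>x\<in>A. sg x))"
proof -
  define d where "d = (\<Prod>x\<in>A. sg x)"
  define D where "D = \<Prod>Ds"
  have d4: "d mod 4 = 1" unfolding d_def using prod_sg_mod4 assms T_sub by blast
  hence d8: "d mod 8 = 1 \<or> d mod 8 = 5" by presburger
  have od: "odd d" using d4 by presburger
  obtain w where w: "p + q = 4*w" using pq4 by blast
  have oD': "odd D" unfolding D_def using oD .
  show ?thesis
  proof (cases "d mod 8 = 1")
    case True
    then obtain j where j: "d = 8*j+1" by (metis mult_div_mod_eq add.commute mult.commute)
    have "[d = d^2] (mod 8)" unfolding cong_iff_dvd_diff
    proof -
      have "d - d^2 = 8 * (-(j * d))" using j by (simp add: algebra_simps power2_eq_square)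
      thus "8 dvd d - d^2" by simp
    qed
    moreover have "Cd_rhs p q D d 1 0 = 1 * d^2" by (simp add: Cd_rhs_int)
    moreover have "d * 1^2 = 1 * d" by simp
    moreover have "padic_nonzero 2 (\<lambda>_. 1::int)" by (rule padic_nonzero_1) simp
    ultimately have "Cd_padic_point 2 p q D d"
      using point_2adic[OF od] by blast
    thus ?thesis unfolding d_def D_def by simp
  next
    case False
    hence "d mod 8 = 5" using d8 by simp
    then obtain j where j: "d = 8*j+5" by (metis mult_div_mod_eq add.commute mult.commute)
    obtain n where n: "D = 2*n+1" using oD' oddE by blast
    define c where "c = 4*d^2 + 2*(p+q)*D*d + D^2"
    have "c - d = 8 * (32*j^2 + 39*j + 12 + w*D*d) + 4*(n*(n+1))"
      unfolding c_def using j n w by (simp add: algebra_simps power2_eq_square)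
    moreover have "8 dvd 4*(n*(n+1))"
    proof -
      have "even (n*(n+1))" by simp
      then obtain u where "n*(n+1) = 2*u" by blast
      thus ?thesis by simp
    qed
    ultimately have "[d = c] (mod 8)" unfolding cong_iff_dvd_diff
      by (metis dvd_add dvd_minus_iff dvd_triv_left minus_diff_eq)
    moreover have "Cd_rhs p q D d 2 1 = 4 * c" unfolding c_def by (simp add: Cd_rhs_int algebra_simps)
    moreover have "d * 2^2 = 4 * d" by simp
    ultimately have "Cd_padic_point 2 p q D d"
      using point_2adic[OF od _ padic_nonzero_2] by blast
    thus ?thesis unfolding d_def D_def by simp
  qed
qed

lemma two_a:
  assumes "A \<subseteq> T" and p8: "p mod 8 = 7" and D8: "\<forall>Di\<in>Ds. Di mod 8 \<in> {1, 7}"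
  shows "Cd_padic_point 2 p q (\<Prod>Ds) (2 * (\<Prod>x\<in>A. sg x))"
proof -
  define d where "d = (\<Prod>x\<in>A. sg x)"
  define D where "D = \<Prod>Ds"
  have AD: "A \<subseteq> Ds" using assms T_sub by blast
  have finA: "finite A" using AD fin finite_subset by blast
  have "\<forall>x\<in>A. sg x mod 8 \<in> {1}"
  proof
    fix x assume "x \<in> A"
    hence "x mod 8 \<in> {1,7}" using D8 AD by auto
    thus "sg x mod 8 \<in> {1}" unfolding sg_def by auto presburger+
  qed
  hence "d mod 8 = 1" unfolding d_def using prod_mod_closed[OF finA, of sg 8 "{1}"] by auto
  then obtain j where j: "d = 8*j+1" by (metis mult_div_mod_eq add.commute mult.commute)
  have "D mod 8 \<in> {1, 7}" unfolding D_def using prod_mod_closed[OF fin, of "\<lambda>x. x" 8 "{1,7}"] D8 by auto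
  then obtain n D0 where n: "D = 8*n + D0" "D0 \<in> {1, 7}" by (metis mult_div_mod_eq add.commute mult.commute)
  obtain k where "p = 8*k + 7" using p8 by (metis mult_div_mod_eq add.commute mult.commute)
  hence w: "p + q = 16*(k+1)" using qp by simp
  define K where "K = 4*j^2 + (k+1)*D*d + 4*n^2 + n*D0 + (if D0 = 1 then 0 else 3)"
  define c where "c = d + 8*K"
  have "Cd_rhs p q D (2*d) 1 1 = 8 * c"
    unfolding c_def K_def using j n w by (auto simp: Cd_rhs_int algebra_simps power2_eq_square)
  moreover have "[d = c] (mod 8)" unfolding c_def cong_iff_dvd_diff by simp
  moreover have "odd d" using j by simp
  moreover have "2*d * 2^2 = 8 * d" by simp
  moreover have "padic_nonzero 2 (\<lambda>_. 1::int)" by (rule padic_nonzero_1) simp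
  ultimately have "Cd_padic_point 2 p q D (2*d)"
    using point_2adic by blast
  thus ?thesis unfolding d_def D_def by simp
qed

lemma two_b:
  assumes "A \<subseteq> T" and p8: "p mod 8 = 1" and D8: "\<forall>Di\<in>Ds. Di mod 8 \<in> {1, 3}"
  shows "Cd_padic_point 2 p q (\<Prod>Ds) (-2 * (\<Prod>x\<in>A. sg x))"
proof -
  define d where "d = (\<Prod>x\<in>A. sg x)"
  define D where "D = \<Prod>Ds"
  have AD: "A \<subseteq> Ds" using assms T_sub by blast
  have "d mod 4 = 1" unfolding d_def using prod_sg_mod4 AD by blast
  then obtain m where m: "d = 4*m+1" by (metis mult_div_mod_eq add.commute mult.commute)
  have "D mod 8 \<in> {1, 3}" unfolding D_def using prod_mod_closed[OF fin, of "\<lambda>x. x" 8 "{1,3}"] D8 by auto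
  then obtain n D0 where n: "D = 8*n + D0" "D0 \<in> {1, 3}" by (metis mult_div_mod_eq add.commute mult.commute)
  obtain k where "p = 8*k + 1" using p8 by (metis mult_div_mod_eq add.commute mult.commute)
  hence w: "p + q = 16*k + 4" using qp by simp
  define K where "K = m^2 + m - k*(8*n+D0)*(4*m+1) - (8*n*m + 2*n + D0*m) + 4*n^2 + n*D0"
  define c where "c = -d + 8*K"
  have "Cd_rhs p q D (-2*d) 1 1 = 8 * c"
    unfolding c_def K_def using m n w by (auto simp: Cd_rhs_int algebra_simps power2_eq_square)
  moreover have "[-d = c] (mod 8)" unfolding c_def cong_iff_dvd_diff by simp
  moreover have "odd (-d)" using m by simp
  moreover have "-2*d * 2^2 = 8 * (-d)" by simp
  moreover have "padic_nonzero 2 (\<lambda>_. 1::int)" by (rule padic_nonzero_1) simp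
  ultimately have "Cd_padic_point 2 p q D (-2*d)"
    using point_2adic by blast
  thus ?thesis unfolding d_def D_def by simp
qed

end


context twin
begin

lemma finite_selmer: "finite (phi_selmer p q Ds)"
proof -
  define M where "M = 2 * p * q * \<Prod>Ds"
  have M0: "M \<noteq> 0" unfolding M_def using p2 q2 D_pos by simp
  have "phi_selmer p q Ds \<subseteq> {-\<bar>M\<bar>..\<bar>M\<bar>}"
  proof
    fix d assume "d \<in> phi_selmer p q Ds"
    hence d0: "d \<noteq> 0" and sq: "squarefree d" and pd: "\<forall>l. prime l \<and> l dvd d \<longrightarrow> l \<in> {2, p, q} \<union> Ds"
      unfolding phi_selmer_def by auto
    have "d dvd M"
    proof (rule multiplicity_le_imp_dvd[OF d0])
      fix r :: int assume r: "prime r"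
      have le1: "multiplicity r d \<le> 1" using sq d0 r squarefree_factorial_semiring'' by blast
      show "multiplicity r d \<le> multiplicity r M"
      proof (cases "multiplicity r d = 0")
        case True thus ?thesis by simp
      next
        case False
        have nu: "\<not> is_unit r" using r not_prime_unit by blast
        hence "r dvd d" using multiplicity_gt_zero_iff[OF d0 nu] False by simp
        hence "r \<in> {2, p, q} \<union> Ds" using pd r by blast
        hence "r = 2 \<or> r = p \<or> r = q \<or> r \<in> Ds" by blast
        hence "r dvd M" unfolding M_def
        proof (elim disjE)
          assume "r \<in> Ds" hence "r dvd \<Prod>Ds" by (rule Ds_facts(5))
          thus "r dvd 2 * p * q * \<Prod>Ds" by (rule dvd_mult)
        qed auto
        hence "multiplicity r M \<ge> 1" using multiplicity_gt_zero_iff[OF M0 nu] by simp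
        thus ?thesis using le1 by simp
      qed
    qed
    hence "\<bar>d\<bar> \<le> \<bar>M\<bar>" using dvd_imp_le_int[OF M0] by blast
    thus "d \<in> {-\<bar>M\<bar>..\<bar>M\<bar>}" by auto
  qed
  thus ?thesis using finite_subset by blast
qed

lemma inj_prod:
  assumes "c \<noteq> 0"
  shows "inj_on (\<lambda>A. c * (\<Prod>x\<in>A. sg x)) (Pow T)"
proof (rule inj_onI)
  fix A B assume A: "A \<in> Pow T" and B: "B \<in> Pow T" and eq: "c * (\<Prod>x\<in>A. sg x) = c * (\<Prod>x\<in>B. sg x)"
  have eq': "(\<Prod>x\<in>A. sg x) = (\<Prod>x\<in>B. sg x)" using eq assms by simp
  have sub: "X \<subseteq> Y" if X: "X \<in> Pow T" and Y: "Y \<in> Pow T" and e: "(\<Prod>x\<in>X. sg x) = (\<Prod>x\<in>Y. sg x)" for X Y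
  proof
    fix x assume x: "x \<in> X"
    have XD: "X \<subseteq> Ds" "Y \<subseteq> Ds" using X Y T_sub by auto
    have finX: "finite X" "finite Y" using XD fin finite_subset by auto
    have "x dvd (\<Prod>x\<in>X. sg x)"
      using dvd_prodI[OF finX(1) x, of sg] sg_facts(5)[of x] x XD dvd_trans by blast
    hence "x dvd (\<Prod>x\<in>Y. sg x)" using e by simp
    then obtain y where y: "y \<in> Y" "x dvd sg y"
      using prime_dvd_prod_iff[OF finX(2), of x sg] Ds_facts(1)[of x] x XD by auto
    have "sg y = y \<or> sg y = -y" using sg_facts(1)[of y] y XD by auto
    hence "x dvd y" using y by auto
    hence "x = y" using primes_dvd_imp_eq[of x y] Ds_facts(1) x y XD by auto
    thus "x \<in> Y" using y by simp
  qed
  show "A = B" using sub[OF A B eq'] sub[OF B A eq'[symmetric]] by blast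
qed

lemma card_lower:
  assumes "\<forall>A \<subseteq> T. c * (\<Prod>x\<in>A. sg x) \<in> phi_selmer p q Ds" "c \<noteq> 0"
  shows "2 ^ card T \<le> card (phi_selmer p q Ds)"
proof -
  have finT: "finite T" using T_sub fin finite_subset by blast
  have "2 ^ card T = card ((\<lambda>A. c * (\<Prod>x\<in>A. sg x)) ` Pow T)"
    using card_image[OF inj_prod[OF assms(2)]] card_Pow[OF finT] by simp
  also have "\<dots> \<le> card (phi_selmer p q Ds)"
    using assms(1) finite_selmer by (intro card_mono) auto
  finally show ?thesis .
qed

lemma card_lower2:
  assumes "\<forall>A \<subseteq> T. (\<Prod>x\<in>A. sg x) \<in> phi_selmer p q Ds \<and> t * (\<Prod>x\<in>A. sg x) \<in> phi_selmer p q Ds"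
    and "t \<in> {2, -2}"
  shows "2 ^ (card T + 1) \<le> card (phi_selmer p q Ds)"
proof -
  have finT: "finite T" using T_sub fin finite_subset by blast
  define S1 where "S1 = (\<lambda>A. 1 * (\<Prod>x\<in>A. sg x)) ` Pow T"
  define S2 where "S2 = (\<lambda>A. t * (\<Prod>x\<in>A. sg x)) ` Pow T"
  have t0: "t \<noteq> 0" using assms(2) by auto
  have c1: "card S1 = 2 ^ card T" unfolding S1_def
    using card_image[OF inj_prod[of 1]] card_Pow[OF finT] by simp
  have c2: "card S2 = 2 ^ card T" unfolding S2_def
    using card_image[OF inj_prod[OF t0]] card_Pow[OF finT] by simp
  have oddA: "odd (\<Prod>x\<in>A. sg x)" if "A \<subseteq> T" for A
  proof -
    have AD: "A \<subseteq> Ds" using that T_sub by auto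
    hence "finite A" using fin finite_subset by blast
    note AD this
    thus ?thesis using prime_dvd_prod_iff[of A 2 sg] sg_facts(3) by auto
  qed
  have et: "even t" using assms(2) by auto
  have disj: "S1 \<inter> S2 = {}"
  proof -
    have "(1::int) * (\<Prod>x\<in>A. sg x) \<noteq> t * (\<Prod>x\<in>B. sg x)" if "A \<subseteq> T" "B \<subseteq> T" for A B
    proof
      assume eq: "1 * (\<Prod>x\<in>A. sg x) = t * (\<Prod>x\<in>B. sg x)"
      have "even (t * (\<Prod>x\<in>B. sg x))" using et by simp
      hence "even (\<Prod>x\<in>A. sg x)" using eq by simp
      thus False using oddA[OF that(1)] by simp
    qed
    thus ?thesis unfolding S1_def S2_def by blast
  qed
  have "2 ^ (card T + 1) = card (S1 \<union> S2)"
    using card_Un_disjoint[of S1 S2] disj c1 c2 finT unfolding S1_def S2_def by simp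
  also have "\<dots> \<le> card (phi_selmer p q Ds)"
    using assms(1) finite_selmer unfolding S1_def S2_def by (intro card_mono) auto
  finally show ?thesis .
qed

end

theorem theorem1p6:
  fixes p q :: int and Ds :: "int set"
  assumes "prime p" and "prime q" and "odd p" and "odd q" and "q - p = 2"
    and "finite Ds" and "\<forall>Di \<in> Ds. prime Di"
    and "odd (\<Prod>Ds)" and "\<not> p dvd (\<Prod>Ds)" and "\<not> q dvd (\<Prod>Ds)"
  shows
    "((\<exists>T s. T \<subseteq> Ds \<and> int (card T) = rho_minus p q Ds \<and> (\<forall>x\<in>T. s x \<in> {x, - x}) \<and>
        (\<forall>A \<subseteq> T. (\<Prod>x\<in>A. s x) \<in> phi_selmer p q Ds)) \<and>
      2 ^ nat (rho_minus p q Ds) \<le> card (phi_selmer p q Ds))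
   \<and>
    (((p mod 8 = 7 \<and> (\<forall>Di\<in>Ds. Di mod 8 \<in> {1, 7})) \<or>
      (p mod 8 = 1 \<and> (\<forall>Di\<in>Ds. Di mod 8 \<in> {1, 3}))) \<longrightarrow>
     (\<exists>T s t. T \<subseteq> Ds \<and> int (card T) = rho_minus p q Ds \<and> (\<forall>x\<in>T. s x \<in> {x, - x}) \<and>
        t \<in> {2, -2} \<and>
        (\<forall>A \<subseteq> T. (\<Prod>x\<in>A. s x) \<in> phi_selmer p q Ds \<and>
                   t * (\<Prod>x\<in>A. s x) \<in> phi_selmer p q Ds)) \<and>
     2 ^ (nat (rho_minus p q Ds) + 1) \<le> card (phi_selmer p q Ds))"
proof -
  interpret twin p q Ds using assms by unfold_locales
  have sgT: "\<forall>x\<in>T. sg x \<in> {x, - x}" using sg_facts(1) T_sub by blast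
  have lprime: "prime l \<and> l > 2" if "l \<in> {p, q} \<union> Ds" for l
  proof -
    have "l = p \<or> l = q \<or> l \<in> Ds" using that by blast
    thus ?thesis
    proof (elim disjE)
      assume "l \<in> Ds" thus ?thesis using Ds_facts(1,2) by blast
    qed (use hp hq p2 q2 in auto)
  qed
  have L1: "\<forall>l \<in> {p, q} \<union> Ds. Legendre 1 l = 1"
  proof
    fix l assume "l \<in> {p, q} \<union> Ds"
    thus "Legendre 1 l = 1" using lprime legendre_one_l by blast
  qed
  have one: "(1::int) \<in> {1, 2, -2}" by simp
  have mem1: "\<forall>A \<subseteq> T. (\<Prod>x\<in>A. sg x) \<in> phi_selmer p q Ds"
  proof (intro allI impI)
    fix A assume A: "A \<subseteq> T"
    have "1 * (\<Prod>x\<in>A. sg x) \<in> phi_selmer p q Ds" by (rule member[OF A one L1 two1[OF A]])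
    thus "(\<Prod>x\<in>A. sg x) \<in> phi_selmer p q Ds" by simp
  qed
  have c1: "2 ^ card T \<le> card (phi_selmer p q Ds)"
  proof (rule card_lower)
    show "\<forall>A\<subseteq>T. 1 * (\<Prod>x\<in>A. sg x) \<in> phi_selmer p q Ds" using mem1 by simp
  qed simp
  have part1: "(\<exists>T s. T \<subseteq> Ds \<and> int (card T) = rho_minus p q Ds \<and> (\<forall>x\<in>T. s x \<in> {x, - x}) \<and>
        (\<forall>A \<subseteq> T. (\<Prod>x\<in>A. s x) \<in> phi_selmer p q Ds)) \<and>
      2 ^ nat (rho_minus p q Ds) \<le> card (phi_selmer p q Ds)"
  proof
    show "\<exists>T s. T \<subseteq> Ds \<and> int (card T) = rho_minus p q Ds \<and> (\<forall>x\<in>T. s x \<in> {x, - x}) \<and>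
        (\<forall>A \<subseteq> T. (\<Prod>x\<in>A. s x) \<in> phi_selmer p q Ds)"
      apply (rule exI[of _ T], rule exI[of _ sg])
      using T_sub rho sgT mem1 by simp
    show "2 ^ nat (rho_minus p q Ds) \<le> card (phi_selmer p q Ds)"
      using c1 rho by simp
  qed
  have part2: "\<exists>t. t \<in> {2, -2} \<and> (\<forall>A \<subseteq> T. (\<Prod>x\<in>A. sg x) \<in> phi_selmer p q Ds \<and>
                   t * (\<Prod>x\<in>A. sg x) \<in> phi_selmer p q Ds)"
    if cond: "(p mod 8 = 7 \<and> (\<forall>Di\<in>Ds. Di mod 8 \<in> {1, 7})) \<or>
      (p mod 8 = 1 \<and> (\<forall>Di\<in>Ds. Di mod 8 \<in> {1, 3}))"
    using cond
  proof
    assume a: "p mod 8 = 7 \<and> (\<forall>Di\<in>Ds. Di mod 8 \<in> {1, 7})"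
    have q8: "q mod 8 = 1" using conjunct1[OF a] qp by presburger
    have Lt: "\<forall>l \<in> {p, q} \<union> Ds. Legendre 2 l = 1"
    proof
      fix l assume l: "l \<in> {p, q} \<union> Ds"
      have "l mod 8 \<in> {1, 7}" using l a q8 by auto
      thus "Legendre 2 l = 1" using legendre_pm2(1) lprime[OF l] by blast
    qed
    have two: "(2::int) \<in> {1, 2, -2}" by simp
    have m2: "\<forall>A \<subseteq> T. 2 * (\<Prod>x\<in>A. sg x) \<in> phi_selmer p q Ds"
    proof (intro allI impI)
      fix A assume A: "A \<subseteq> T"
      show "2 * (\<Prod>x\<in>A. sg x) \<in> phi_selmer p q Ds"
        by (rule member[OF A two Lt two_a[OF A conjunct1[OF a] conjunct2[OF a]]])
    qed
    show ?thesis
      apply (rule exI[of _ 2])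
      using mem1 m2 by simp
  next
    assume b: "p mod 8 = 1 \<and> (\<forall>Di\<in>Ds. Di mod 8 \<in> {1, 3})"
    have q8: "q mod 8 = 3" using conjunct1[OF b] qp by presburger
    have Lt: "\<forall>l \<in> {p, q} \<union> Ds. Legendre (-2) l = 1"
    proof
      fix l assume l: "l \<in> {p, q} \<union> Ds"
      have "l mod 8 \<in> {1, 3}" using l b q8 by auto
      thus "Legendre (-2) l = 1" using legendre_pm2(2) lprime[OF l] by blast
    qed
    have two: "(-2::int) \<in> {1, 2, -2}" by simp
    have m2: "\<forall>A \<subseteq> T. -2 * (\<Prod>x\<in>A. sg x) \<in> phi_selmer p q Ds"
    proof (intro allI impI)
      fix A assume A: "A \<subseteq> T"
      show "-2 * (\<Prod>x\<in>A. sg x) \<in> phi_selmer p q Ds"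
        by (rule member[OF A two Lt two_b[OF A conjunct1[OF b] conjunct2[OF b]]])
    qed
    show ?thesis
      apply (rule exI[of _ "-2"])
      using mem1 m2 by simp
  qed
  show ?thesis
  proof (rule conjI[OF part1], intro impI conjI)
    assume cond: "(p mod 8 = 7 \<and> (\<forall>Di\<in>Ds. Di mod 8 \<in> {1, 7})) \<or>
      (p mod 8 = 1 \<and> (\<forall>Di\<in>Ds. Di mod 8 \<in> {1, 3}))"
    obtain t where t: "t \<in> {2, -2}" "\<forall>A \<subseteq> T. (\<Prod>x\<in>A. sg x) \<in> phi_selmer p q Ds \<and>
                   t * (\<Prod>x\<in>A. sg x) \<in> phi_selmer p q Ds" using part2[OF cond] by blast
    show "\<exists>T s t. T \<subseteq> Ds \<and> int (card T) = rho_minus p q Ds \<and> (\<forall>x\<in>T. s x \<in> {x, - x}) \<and>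
        t \<in> {2, -2} \<and>
        (\<forall>A \<subseteq> T. (\<Prod>x\<in>A. s x) \<in> phi_selmer p q Ds \<and>
                   t * (\<Prod>x\<in>A. s x) \<in> phi_selmer p q Ds)"
      apply (rule exI[of _ T], rule exI[of _ sg], rule exI[of _ t])
      using T_sub rho sgT t by simp
    show "2 ^ (nat (rho_minus p q Ds) + 1) \<le> card (phi_selmer p q Ds)"
      using card_lower2[OF t(2) t(1)] rho by simp
  qed
qed

end
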